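(* Let $A,K$ be associative algebras and $\xi:A\to\mathrm{Out}(K)$ a coupling admitting a bimultiplication law covering it. Then the $A$-kernel $(K,\xi)$ is extendible if and only if $\mathrm{Obs}(\xi)=0$ in $HH^3(A,\mathrm{Anni}K)$.
   Context: All algebras are associative, not necessarily unital, over a field $\mathbb F$. For an algebra $K$, a bimultiplication of $K$ is a pair $(u,v)$ of linear maps $K\to K$ with $k_1u(k_2)=v(k_1)k_2$, $u(k_1k_2)=u(k_1)k_2$, $v(k_1k_2)=k_1v(k_2)$; these form an algebra $\mathrm{Mul}(K)$ with product $(u_1,v_1)(u_2,v_2)=(u_1\circ u_2,\ v_2\circ v_1)$. $\epsilon:K\to\mathrm{Mul}(K)$, $\epsilon(k_0)=(k\mapsto k_0k,\ k\mapsto kk_0)$; $\mathrm{Inn}(K)=\epsilon(K)$, $\mathrm{Out}(K)=\mathrm{Mul}(K)/\mathrm{Inn}(K)$ with projection $\natural$; $\mathrm{Anni}K=\{k: kK=0=Kk\}$. A coupling is an algebra homomorphism $\xi:A\to\mathrm{Out}(K)$; $(K,\xi)$ is called an $A$-kernel. A bimultiplication law covering $\xi$ is a linear map $\mu:A\to\mathrm{Mul}(K)$, $\mu(a)=(u_a,v_a)$, with $\natural\circ\mu=\xi$ and $u_av_b=v_bu_a$ for all $a,b\in A$; $\mathrm{Anni}K$ is then an $A$-bimodule via $a\cdot n=u_a(n)$, $n\cdot a=v_a(n)$, independent of $\mu$. Curvature $R^\mu(a_1,a_2)=\mu(a_1)\mu(a_2)-\mu(a_1a_2)\in\mathrm{Inn}(K)$;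 a hindrance is a bilinear $h:A\times A\to K$ with $\epsilon\circ h=R^\mu$; $f(\mu,h)(a_1,a_2,a_3)=u_{a_1}h(a_2,a_3)-h(a_1a_2,a_3)+h(a_1,a_2a_3)-v_{a_3}h(a_1,a_2)$ is a Hochschild 3-cocycle with values in $\mathrm{Anni}K$ whose class $\mathrm{Obs}(\xi)\in HH^3(A,\mathrm{Anni}K)$ is independent of $\mu,h$. The kernel $(K,\xi)$ is extendible if there is an algebra $B$ containing $K$ as a two-sided ideal and a surjective algebra homomorphism $\beta:B\to A$ with kernel $K$ such that for a linear section $\gamma$ of $\beta$, $\xi(a)=\natural\big(k\mapsto\gamma(a)k,\ k\mapsto k\gamma(a)\big)$ for all $a\in A$. *)

theory Defs
  imports Main
begin

text \<open>An associative (not necessarily unital) algebra over a field 'f, given by explicit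
operations on a type whose whole universe is the carrier.\<close>

record ('f, 'a) alg =
  aadd :: "'a \<Rightarrow> 'a \<Rightarrow> 'a"
  azero :: 'a
  aneg :: "'a \<Rightarrow> 'a"
  asc :: "'f \<Rightarrow> 'a \<Rightarrow> 'a"
  amul :: "'a \<Rightarrow> 'a \<Rightarrow> 'a"

definition is_alg :: "('f::field, 'a) alg \<Rightarrow> bool" where
  "is_alg R \<longleftrightarrow>
     (\<forall>x y z. aadd R (aadd R x y) z = aadd R x (aadd R y z)) \<and>
     (\<forall>x y. aadd R x y = aadd R y x) \<and>
     (\<forall>x. aadd R (azero R) x = x) \<and>
     (\<forall>x. aadd R (aneg R x) x = azero R) \<and>
     (\<forall>a b x. asc R (a * b) x = asc R a (asc R b x)) \<and>
     (\<forall>x. asc R 1 x = x) \<and>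
     (\<forall>a x y. asc R a (aadd R x y) = aadd R (asc R a x) (asc R a y)) \<and>
     (\<forall>a b x. asc R (a + b) x = aadd R (asc R a x) (asc R b x)) \<and>
     (\<forall>x y z. amul R (amul R x y) z = amul R x (amul R y z)) \<and>
     (\<forall>x y z. amul R x (aadd R y z) = aadd R (amul R x y) (amul R x z)) \<and>
     (\<forall>x y z. amul R (aadd R x y) z = aadd R (amul R x z) (amul R y z)) \<and>
     (\<forall>a x y. amul R (asc R a x) y = asc R a (amul R x y)) \<and>
     (\<forall>a x y. amul R x (asc R a y) = asc R a (amul R x y))"

definition asub :: "('f, 'a) alg \<Rightarrow> 'a \<Rightarrow> 'a \<Rightarrow> 'a" where
  "asub R x y = aadd R x (aneg R y)"

definition lin :: "('f, 'a) alg \<Rightarrow> ('f, 'b) alg \<Rightarrow> ('a \<Rightarrow> 'b) \<Rightarrow> bool" where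
  "lin R S f \<longleftrightarrow> (\<forall>x y. f (aadd R x y) = aadd S (f x) (f y)) \<and>
                  (\<forall>c x. f (asc R c x) = asc S c (f x))"

definition alg_hom :: "('f, 'a) alg \<Rightarrow> ('f, 'b) alg \<Rightarrow> ('a \<Rightarrow> 'b) \<Rightarrow> bool" where
  "alg_hom R S f \<longleftrightarrow> lin R S f \<and> (\<forall>x y. f (amul R x y) = amul S (f x) (f y))"

definition bilin :: "('f, 'a) alg \<Rightarrow> ('f, 'k) alg \<Rightarrow> ('a \<Rightarrow> 'a \<Rightarrow> 'k) \<Rightarrow> bool" where
  "bilin A K g \<longleftrightarrow> (\<forall>a. lin A K (g a)) \<and> (\<forall>b. lin A K (\<lambda>a. g a b))"

type_synonym 'k bim = "('k \<Rightarrow> 'k) \<times> ('k \<Rightarrow> 'k)"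

definition bimult :: "('f, 'k) alg \<Rightarrow> 'k bim \<Rightarrow> bool" where
  "bimult K p \<longleftrightarrow> lin K K (fst p) \<and> lin K K (snd p) \<and>
     (\<forall>k1 k2. amul K k1 (fst p k2) = amul K (snd p k1) k2) \<and>
     (\<forall>k1 k2. fst p (amul K k1 k2) = amul K (fst p k1) k2) \<and>
     (\<forall>k1 k2. snd p (amul K k1 k2) = amul K k1 (snd p k2))"

definition Mul :: "('f, 'k) alg \<Rightarrow> 'k bim set" where
  "Mul K = {p. bimult K p}"

definition mul_add :: "('f, 'k) alg \<Rightarrow> 'k bim \<Rightarrow> 'k bim \<Rightarrow> 'k bim" where
  "mul_add K p q = (\<lambda>k. aadd K (fst p k) (fst q k), \<lambda>k. aadd K (snd p k) (snd q k))"

definition mul_sc :: "('f, 'k) alg \<Rightarrow> 'f \<Rightarrow> 'k bim \<Rightarrow> 'k bim" where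
  "mul_sc K c p = (\<lambda>k. asc K c (fst p k), \<lambda>k. asc K c (snd p k))"

definition mul_prod :: "'k bim \<Rightarrow> 'k bim \<Rightarrow> 'k bim" where
  "mul_prod p q = (fst p \<circ> fst q, snd q \<circ> snd p)"

definition eps :: "('f, 'k) alg \<Rightarrow> 'k \<Rightarrow> 'k bim" where
  "eps K k0 = (\<lambda>k. amul K k0 k, \<lambda>k. amul K k k0)"

definition Inn :: "('f, 'k) alg \<Rightarrow> 'k bim set" where
  "Inn K = range (eps K)"

text \<open>The projection Mul(K) \<rightarrow> Out(K) = Mul(K)/Inn(K): the coset m + Inn(K).\<close>

definition out_class :: "('f, 'k) alg \<Rightarrow> 'k bim \<Rightarrow> 'k bim set" where
  "out_class K m = {mul_add K m (eps K k) | k. True}"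

definition Out :: "('f, 'k) alg \<Rightarrow> 'k bim set set" where
  "Out K = out_class K ` Mul K"

text \<open>A coupling: an algebra homomorphism A \<rightarrow> Out(K) (quotient algebra operations
  computed on representatives).\<close>

definition coupling :: "('f, 'a) alg \<Rightarrow> ('f, 'k) alg \<Rightarrow> ('a \<Rightarrow> 'k bim set) \<Rightarrow> bool" where
  "coupling A K xi \<longleftrightarrow>
     (\<forall>a. xi a \<in> Out K) \<and>
     (\<forall>a b m1 m2. m1 \<in> xi a \<longrightarrow> m2 \<in> xi b \<longrightarrow>
        xi (aadd A a b) = out_class K (mul_add K m1 m2) \<and>
        xi (amul A a b) = out_class K (mul_prod m1 m2)) \<and>
     (\<forall>c a m. m \<in> xi a \<longrightarrow> xi (asc A c a) = out_class K (mul_sc K c m))"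

definition bimult_law ::
  "('f, 'a) alg \<Rightarrow> ('f, 'k) alg \<Rightarrow> ('a \<Rightarrow> 'k bim set) \<Rightarrow> ('a \<Rightarrow> 'k bim) \<Rightarrow> bool" where
  "bimult_law A K xi mu \<longleftrightarrow>
     (\<forall>a b. mu (aadd A a b) = mul_add K (mu a) (mu b)) \<and>
     (\<forall>c a. mu (asc A c a) = mul_sc K c (mu a)) \<and>
     (\<forall>a. mu a \<in> Mul K \<and> out_class K (mu a) = xi a) \<and>
     (\<forall>a b. fst (mu a) \<circ> snd (mu b) = snd (mu b) \<circ> fst (mu a))"

definition Anni :: "('f, 'k) alg \<Rightarrow> 'k set" where
  "Anni K = {n. \<forall>k. amul K n k = azero K \<and> amul K k n = azero K}"

definition hindrance ::
  "('f, 'a) alg \<Rightarrow> ('f, 'k) alg \<Rightarrow> ('a \<Rightarrow> 'k bim) \<Rightarrow> ('a \<Rightarrow> 'a \<Rightarrow> 'k) \<Rightarrow> bool" where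
  "hindrance A K mu h \<longleftrightarrow> bilin A K h \<and>
     (\<forall>a1 a2. mul_add K (eps K (h a1 a2)) (mu (amul A a1 a2)) = mul_prod (mu a1) (mu a2))"

definition obs_cocycle ::
  "('f, 'a) alg \<Rightarrow> ('f, 'k) alg \<Rightarrow> ('a \<Rightarrow> 'k bim) \<Rightarrow> ('a \<Rightarrow> 'a \<Rightarrow> 'k) \<Rightarrow> 'a \<Rightarrow> 'a \<Rightarrow> 'a \<Rightarrow> 'k" where
  "obs_cocycle A K mu h a1 a2 a3 =
     asub K (aadd K (asub K (fst (mu a1) (h a2 a3)) (h (amul A a1 a2) a3)) (h a1 (amul A a2 a3)))
            (snd (mu a3) (h a1 a2))"

text \<open>Hochschild coboundary of a 2-cochain g with values in the A-bimodule Anni K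
  (a\<cdot>n = u_a n, n\<cdot>a = v_a n).\<close>

definition hoch_cobound2 ::
  "('f, 'a) alg \<Rightarrow> ('f, 'k) alg \<Rightarrow> ('a \<Rightarrow> 'k bim) \<Rightarrow> ('a \<Rightarrow> 'a \<Rightarrow> 'k) \<Rightarrow> 'a \<Rightarrow> 'a \<Rightarrow> 'a \<Rightarrow> 'k" where
  "hoch_cobound2 A K mu g a1 a2 a3 =
     asub K (aadd K (asub K (fst (mu a1) (g a2 a3)) (g (amul A a1 a2) a3)) (g a1 (amul A a2 a3)))
            (snd (mu a3) (g a1 a2))"

text \<open>Obs(xi) = [f(mu,h)] = 0 in HH^3(A, Anni K): f(mu,h) is a Hochschild coboundary of a
  bilinear 2-cochain with values in Anni K.\<close>

definition obs_vanishes ::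
  "('f, 'a) alg \<Rightarrow> ('f, 'k) alg \<Rightarrow> ('a \<Rightarrow> 'k bim) \<Rightarrow> ('a \<Rightarrow> 'a \<Rightarrow> 'k) \<Rightarrow> bool" where
  "obs_vanishes A K mu h \<longleftrightarrow>
     (\<exists>g. bilin A K g \<and> (\<forall>a b. g a b \<in> Anni K) \<and>
          (\<forall>a1 a2 a3. obs_cocycle A K mu h a1 a2 a3 = hoch_cobound2 A K mu g a1 a2 a3))"

definition extendible ::
  "'b itself \<Rightarrow> ('f::field, 'a) alg \<Rightarrow> ('f, 'k) alg \<Rightarrow> ('a \<Rightarrow> 'k bim set) \<Rightarrow> bool" where
  "extendible _ A K xi \<longleftrightarrow>
     (\<exists>(B :: ('f, 'b) alg) iota beta gamma.
        is_alg B \<and> alg_hom K B iota \<and> inj iota \<and>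
        (\<forall>b k. amul B b (iota k) \<in> range iota \<and> amul B (iota k) b \<in> range iota) \<and>
        alg_hom B A beta \<and> surj beta \<and> {b. beta b = azero A} = range iota \<and>
        lin A B gamma \<and> (\<forall>a. beta (gamma a) = a) \<and>
        (\<forall>a. xi a = out_class K (\<lambda>k. inv iota (amul B (gamma a) (iota k)),
                                 \<lambda>k. inv iota (amul B (iota k) (gamma a)))))"

end

theory Submission
  imports Defs "HOL-Algebra.Ring"
begin


locale nalg = fixes R :: "('f::field,'a) alg" assumes ax: "is_alg R"
begin
lemmas axs = ax[unfolded is_alg_def]
lemma a_assoc: "aadd R (aadd R x y) z = aadd R x (aadd R y z)" using axs by (elim conjE) (drule spec)+
lemma a_comm: "aadd R x y = aadd R y x" using axs by (elim conjE) (drule spec)+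
lemma l_zero: "aadd R (azero R) x = x" using axs by (elim conjE) (drule spec)+
lemma l_neg: "aadd R (aneg R x) x = azero R" using axs by (elim conjE) (drule spec)+
lemma sc_mult: "asc R (a * b) x = asc R a (asc R b x)" using axs by (elim conjE) (drule spec)+
lemma sc_one: "asc R 1 x = x" using axs by (elim conjE) (drule spec)+
lemma sc_add: "asc R a (aadd R x y) = aadd R (asc R a x) (asc R a y)" using axs by (elim conjE) (drule spec)+
lemma sc_add2: "asc R (a + b) x = aadd R (asc R a x) (asc R b x)" using axs by (elim conjE) (drule spec)+
lemma m_assoc: "amul R (amul R x y) z = amul R x (amul R y z)" using axs by (elim conjE) (drule spec)+
lemma r_distr: "amul R x (aadd R y z) = aadd R (amul R x y) (amul R x z)" using axs by (elim conjE) (drule spec)+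
lemma l_distr: "amul R (aadd R x y) z = aadd R (amul R x z) (amul R y z)" using axs by (elim conjE) (drule spec)+
lemma m_scl: "amul R (asc R a x) y = asc R a (amul R x y)" using axs by (elim conjE) (drule spec)+
lemma m_scr: "amul R x (asc R a y) = asc R a (amul R x y)" using axs by (elim conjE) (drule spec)+

lemma a_lcomm: "aadd R x (aadd R y z) = aadd R y (aadd R x z)" by (metis a_assoc a_comm)
lemma r_zero: "aadd R x (azero R) = x" by (metis a_comm l_zero)
lemma r_neg: "aadd R x (aneg R x) = azero R" by (metis a_comm l_neg)
lemma r_neg1: "aadd R (aneg R x) (aadd R x y) = y" by (metis a_assoc l_neg l_zero)
lemma r_neg2: "aadd R x (aadd R (aneg R x) y) = y" by (metis a_assoc r_neg l_zero)
lemma minus_minus: "aneg R (aneg R x) = x" by (metis r_neg1 r_neg r_zero)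
lemma minus_add: "aneg R (aadd R x y) = aadd R (aneg R x) (aneg R y)"
  by (metis a_assoc a_comm r_neg1 r_neg r_zero)
lemma minus_zero: "aneg R (azero R) = azero R" by (metis l_neg r_zero)
lemma add_cancel: "aadd R x y = aadd R x z \<Longrightarrow> y = z" by (metis r_neg1)
lemma zero_unique: "aadd R x x = x \<Longrightarrow> x = azero R" by (metis add_cancel r_zero)
lemma l_null: "amul R (azero R) x = azero R"
  by (rule zero_unique, metis l_distr l_zero)
lemma r_null: "amul R x (azero R) = azero R"
  by (rule zero_unique, metis r_distr l_zero)
lemma l_minus: "amul R (aneg R x) y = aneg R (amul R x y)"
  by (metis l_distr l_neg l_null r_neg1 r_zero)
lemma r_minus: "amul R x (aneg R y) = aneg R (amul R x y)"
  by (metis r_distr l_neg r_null r_neg1 r_zero)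
lemma minus_eq: "asub R x y = aadd R x (aneg R y)" by (simp add: asub_def)
lemma sc_zero: "asc R c (azero R) = azero R" by (rule zero_unique, metis sc_add l_zero)
lemma zero_sc: "asc R 0 x = azero R" by (rule zero_unique, metis sc_add2 add_0)
lemma sc_neg: "asc R c (aneg R x) = aneg R (asc R c x)"
  by (metis sc_add l_neg sc_zero r_neg1 r_zero)
lemma sc_minus1: "asc R (-1) x = aneg R x"
proof -
  have "aadd R (asc R (-1) x) x = azero R" by (metis sc_add2 sc_one zero_sc add.left_inverse)
  then show ?thesis by (metis r_neg1 r_zero a_comm)
qed
lemma sub_eq_zero: "asub R x y = azero R \<longleftrightarrow> x = y"
  by (metis minus_eq r_neg a_comm r_neg1 r_zero)

lemmas nalg_simprules [algebra add: nalg "azero R" "aadd R" "aneg R" "asub R" "amul R"] =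
  a_assoc l_zero l_neg a_comm m_assoc l_distr minus_eq r_zero r_neg r_neg2 r_neg1 minus_add minus_minus minus_zero
  a_lcomm r_distr l_null r_null l_minus r_minus
end




lemma lin_select:
  fixes A :: "('f::field,'a) alg" and K :: "('f,'k) alg" and P :: "'a \<Rightarrow> 'k \<Rightarrow> bool"
  assumes nA: "nalg A" and nK: "nalg K"
   and ex: "\<And>a. \<exists>y. P a y"
   and padd: "\<And>a y a' y'. P a y \<Longrightarrow> P a' y' \<Longrightarrow> P (aadd A a a') (aadd K y y')"
   and psc: "\<And>c a y. P a y \<Longrightarrow> P (asc A c a) (asc K c y)"
  shows "\<exists>f. lin A K f \<and> (\<forall>a. P a (f a))"
proof -
  interpret A: nalg A by (rule nA)
  interpret K: nalg K by (rule nK)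
  define S where "S = {G. (\<forall>p\<in>G. P (fst p) (snd p)) \<and>
     (\<forall>p\<in>G. \<forall>q\<in>G. (aadd A (fst p) (fst q), aadd K (snd p) (snd q)) \<in> G) \<and>
     (\<forall>c. \<forall>p\<in>G. (asc A c (fst p), asc K c (snd p)) \<in> G) \<and>
     (\<forall>p\<in>G. \<forall>q\<in>G. fst p = fst q \<longrightarrow> snd p = snd q) \<and> (azero A, azero K) \<in> G}"
  have SD1: "\<And>G p. G \<in> S \<Longrightarrow> p \<in> G \<Longrightarrow> P (fst p) (snd p)" unfolding S_def by blast
  have SD2: "\<And>G p q. G \<in> S \<Longrightarrow> p \<in> G \<Longrightarrow> q \<in> G \<Longrightarrow>
      (aadd A (fst p) (fst q), aadd K (snd p) (snd q)) \<in> G" unfolding S_def by blast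
  have SD3: "\<And>G p c. G \<in> S \<Longrightarrow> p \<in> G \<Longrightarrow> (asc A c (fst p), asc K c (snd p)) \<in> G"
    unfolding S_def by blast
  have SD4: "\<And>G p q. G \<in> S \<Longrightarrow> p \<in> G \<Longrightarrow> q \<in> G \<Longrightarrow> fst p = fst q \<Longrightarrow> snd p = snd q"
    unfolding S_def mem_Collect_eq by (elim conjE) (drule bspec, assumption, drule bspec, assumption, erule mp)
  have SD5: "\<And>G. G \<in> S \<Longrightarrow> (azero A, azero K) \<in> G" unfolding S_def by blast
  have SI: "G \<in> S" if "\<And>p. p \<in> G \<Longrightarrow> P (fst p) (snd p)"
    "\<And>p q. p \<in> G \<Longrightarrow> q \<in> G \<Longrightarrow> (aadd A (fst p) (fst q), aadd K (snd p) (snd q)) \<in> G"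
    "\<And>p c. p \<in> G \<Longrightarrow> (asc A c (fst p), asc K c (snd p)) \<in> G"
    "\<And>p q. p \<in> G \<Longrightarrow> q \<in> G \<Longrightarrow> fst p = fst q \<Longrightarrow> snd p = snd q"
    "(azero A, azero K) \<in> G" for G
    unfolding S_def using that by blast
  have P00: "P (azero A) (azero K)"
  proof -
    obtain y where "P (azero A) y" using ex by blast
    from psc[OF this, of 0] show ?thesis by (simp add: A.zero_sc K.zero_sc)
  qed
  have S0: "{(azero A, azero K)} \<in> S"
    by (rule SI) (auto simp add: P00 A.l_zero K.l_zero A.sc_zero K.sc_zero)
  have "\<exists>M\<in>S. \<forall>X\<in>S. M \<subseteq> X \<longrightarrow> X = M"
  proof (rule Zorn_Lemma2, intro ballI)
    fix C assume C: "C \<in> chains S"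
    let ?U = "insert (azero A, azero K) (\<Union>C)"
    have CS: "C \<subseteq> S" using C by (rule chainsD2)
    have two: "\<exists>G\<in>S. p \<in> G \<and> q \<in> G \<and> G \<subseteq> ?U" if pU: "p \<in> ?U" and qU: "q \<in> ?U" for p q
    proof -
      have z: "(azero A, azero K) \<in> G" if "G \<in> C" for G using that CS SD5 by blast
      consider "p = (azero A, azero K)" "q = (azero A, azero K)"
        | G where "G \<in> C" "p = (azero A, azero K)" "q \<in> G"
        | G where "G \<in> C" "q = (azero A, azero K)" "p \<in> G"
        | G1 G2 where "G1 \<in> C" "G2 \<in> C" "p \<in> G1" "q \<in> G2"
        using pU qU by blast
      then show ?thesis
      proof cases
        case 1 then show ?thesis using S0 by blast
      next
        case 2 then show ?thesis using z CS by blast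
      next
        case 3 then show ?thesis using z CS by blast
      next
        case 4
        then have "G1 \<subseteq> G2 \<or> G2 \<subseteq> G1" using chainsD[OF C] by blast
        then show ?thesis using 4 CS by blast
      qed
    qed
    have "?U \<in> S"
    proof (rule SI)
      fix p assume pU: "p \<in> ?U"
      obtain G where G: "G \<in> S" "p \<in> G" using two[OF pU pU] by blast
      show "P (fst p) (snd p)" by (rule SD1[OF G])
    next
      fix p q assume pU: "p \<in> ?U" and qU: "q \<in> ?U"
      obtain G where G: "G \<in> S" "p \<in> G" "q \<in> G" "G \<subseteq> ?U" using two[OF pU qU] by blast
      show "(aadd A (fst p) (fst q), aadd K (snd p) (snd q)) \<in> ?U"
        using SD2[OF G(1-3)] G(4) by (rule subsetD[rotated])
    next
      fix p c assume pU: "p \<in> ?U"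
      obtain G where G: "G \<in> S" "p \<in> G" "G \<subseteq> ?U" using two[OF pU pU] by blast
      show "(asc A c (fst p), asc K c (snd p)) \<in> ?U"
        using SD3[OF G(1-2)] G(3) by (rule subsetD[rotated])
    next
      fix p q assume pU: "p \<in> ?U" and qU: "q \<in> ?U" and e: "fst p = fst q"
      obtain G where G: "G \<in> S" "p \<in> G" "q \<in> G" using two[OF pU qU] by blast
      show "snd p = snd q" by (rule SD4[OF G(1) G(2) G(3) e])
    next
      show "(azero A, azero K) \<in> ?U" by (rule insertI1)
    qed
    moreover have "\<forall>X\<in>C. X \<subseteq> ?U" by (intro ballI subset_insertI2 Union_upper)
    ultimately show "\<exists>U\<in>S. \<forall>X\<in>C. X \<subseteq> U" by (rule bexI[rotated])
  qed
  then obtain M where MS: "M \<in> S" and Mmax: "\<And>X. X \<in> S \<Longrightarrow> M \<subseteq> X \<Longrightarrow> X = M" by blast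
  have Mp: "\<And>p. p \<in> M \<Longrightarrow> P (fst p) (snd p)" using MS SD1 by blast
  have Madd: "(aadd A x x', aadd K y y') \<in> M" if "(x,y) \<in> M" "(x',y') \<in> M" for x y x' y'
    using SD2[OF MS that] by simp
  have Msc: "(asc A c x, asc K c y) \<in> M" if "(x,y) \<in> M" for c x y
    using SD3[OF MS that] by simp
  have Mfun: "y = y'" if "(x,y) \<in> M" "(x,y') \<in> M" for x y y'
    using SD4[OF MS that] by simp
  have M0: "(azero A, azero K) \<in> M" using MS SD5 by blast
  have total: "\<exists>y. (a, y) \<in> M" for a
  proof (rule ccontr)
    assume nv: "\<not> (\<exists>y. (a, y) \<in> M)"
    obtain u where u: "P a u" using ex by blast
    define M' where "M' = {(aadd A x (asc A t a), aadd K y (asc K t u)) | x y t. (x,y) \<in> M}"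
    have sub: "M \<subseteq> M'"
    proof
      fix p assume "p \<in> M"
      then show "p \<in> M'" unfolding M'_def
        by (intro CollectI exI[of _ "fst p"] exI[of _ "snd p"] exI[of _ 0])
           (simp add: A.zero_sc K.zero_sc A.r_zero K.r_zero)
    qed
    have inM': "(a, u) \<in> M'" unfolding M'_def
      by (intro CollectI exI[of _ "azero A"] exI[of _ "azero K"] exI[of _ 1])
           (simp add: A.sc_one K.sc_one A.l_zero K.l_zero M0)
    have "M' \<in> S"
    proof (rule SI)
      fix p assume "p \<in> M'"
      then obtain x y t where p: "p = (aadd A x (asc A t a), aadd K y (asc K t u))" "(x,y) \<in> M"
        unfolding M'_def by blast
      show "P (fst p) (snd p)" unfolding p fst_conv snd_conv
        using padd[OF Mp[OF p(2), simplified] psc[OF u]] .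
    next
      show "\<And>p q. p \<in> M' \<Longrightarrow> q \<in> M' \<Longrightarrow> (aadd A (fst p) (fst q), aadd K (snd p) (snd q)) \<in> M'"
      proof -
        fix p q assume "p \<in> M'" "q \<in> M'"
        then obtain x y t x' y' t' where p: "p = (aadd A x (asc A t a), aadd K y (asc K t u))" "(x,y) \<in> M"
          and q: "q = (aadd A x' (asc A t' a), aadd K y' (asc K t' u))" "(x',y') \<in> M"
          unfolding M'_def by blast
        have e1: "aadd A (fst p) (fst q) = aadd A (aadd A x x') (asc A (t + t') a)"
          unfolding p q fst_conv A.sc_add2 by algebra
        have e2: "aadd K (snd p) (snd q) = aadd K (aadd K y y') (asc K (t + t') u)"
          unfolding p q snd_conv K.sc_add2 by algebra
        show "(aadd A (fst p) (fst q), aadd K (snd p) (snd q)) \<in> M'"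
          unfolding e1 e2 M'_def using Madd[OF p(2) q(2)] by blast
      qed
    next
      show "\<And>p c. p \<in> M' \<Longrightarrow> (asc A c (fst p), asc K c (snd p)) \<in> M'"
      proof -
        fix c p assume "p \<in> M'"
        then obtain x y t where p: "p = (aadd A x (asc A t a), aadd K y (asc K t u))" "(x,y) \<in> M"
          unfolding M'_def by blast
        have e1: "asc A c (fst p) = aadd A (asc A c x) (asc A (c * t) a)"
          unfolding p fst_conv A.sc_add A.sc_mult ..
        have e2: "asc K c (snd p) = aadd K (asc K c y) (asc K (c * t) u)"
          unfolding p snd_conv K.sc_add K.sc_mult ..
        show "(asc A c (fst p), asc K c (snd p)) \<in> M'"
          unfolding e1 e2 M'_def using Msc[OF p(2)] by blast
      qed
    next
      show "\<And>p q. p \<in> M' \<Longrightarrow> q \<in> M' \<Longrightarrow> fst p = fst q \<Longrightarrow> snd p = snd q"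
      proof -
        fix p q assume "p \<in> M'" "q \<in> M'" and eq: "fst p = fst q"
        then obtain x y t x' y' t' where p: "p = (aadd A x (asc A t a), aadd K y (asc K t u))" "(x,y) \<in> M"
          and q: "q = (aadd A x' (asc A t' a), aadd K y' (asc K t' u))" "(x',y') \<in> M"
          unfolding M'_def by blast
        have eq': "aadd A x (asc A t a) = aadd A x' (asc A t' a)" using eq p q by simp
        show "snd p = snd q"
        proof (cases "t = t'")
          case True
          then have "x = x'" using eq' by (metis A.a_comm A.add_cancel)
          then have "y = y'" using Mfun p(2) q(2) by blast
          then show ?thesis using p q True by simp
        next
          case False
          define s where "s = inverse (t - t')"
          have neg: "(asc A (-1) x, asc K (-1) y) \<in> M" using Msc[OF p(2)] .
          have "(asc A s (aadd A x' (asc A (-1) x)), asc K s (aadd K y' (asc K (-1) y))) \<in> M"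
            using Msc[OF Madd[OF q(2) neg]] .
          moreover have "asc A s (aadd A x' (asc A (-1) x)) = a"
          proof -
            have "aadd A x' (asc A (-1) x) = aadd A (asc A t a) (aneg A (asc A t' a))"
            proof -
              have "aadd A x' (aneg A x) = aadd A (aadd A x' (asc A t' a)) (aadd A (aneg A x) (aneg A (asc A t' a)))"
                by algebra
              also have "\<dots> = aadd A (aadd A x (asc A t a)) (aadd A (aneg A x) (aneg A (asc A t' a)))"
                using eq' by simp
              also have "\<dots> = aadd A (asc A t a) (aneg A (asc A t' a))" by algebra
              finally show ?thesis by (simp add: A.sc_minus1)
            qed
            also have "\<dots> = asc A (t - t') a"
              by (metis A.sc_add2 A.sc_minus1 A.sc_mult diff_conv_add_uminus mult_minus1)
            finally have "aadd A x' (asc A (-1) x) = asc A (t - t') a" .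
            then show ?thesis using False by (simp add: s_def A.sc_mult[symmetric] A.sc_one)
          qed
          ultimately show ?thesis using nv by auto
        qed
      qed
    next
      show "(azero A, azero K) \<in> M'" using sub M0 by blast
    qed
    then have "M' = M" using Mmax sub by blast
    then show False using inM' nv by blast
  qed
  define f where "f a = (SOME y. (a, y) \<in> M)" for a
  have fM: "(a, f a) \<in> M" for a unfolding f_def using total by (rule someI_ex)
  have "lin A K f" unfolding lin_def
    using Mfun fM Madd[OF fM fM] Msc[OF fM] by blast
  moreover have "\<forall>a. P a (f a)" using Mp[OF fM] by simp
  ultimately show ?thesis by blast
qed




lemma lin_add: "lin R S f \<Longrightarrow> f (aadd R x y) = aadd S (f x) (f y)" unfolding lin_def by blast
lemma lin_sc: "lin R S f \<Longrightarrow> f (asc R c x) = asc S c (f x)" unfolding lin_def by blast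
lemma lin_zero: assumes "nalg R" "nalg S" "lin R S f" shows "f (azero R) = azero S"
proof -
  interpret R: nalg R by fact
  interpret S: nalg S by fact
  have "f (azero R) = aadd S (f (azero R)) (f (azero R))"
    using lin_add[OF assms(3), of "azero R" "azero R"] by (simp add: R.l_zero)
  then show ?thesis using S.zero_unique by metis
qed
lemma lin_neg: assumes "nalg R" "nalg S" "lin R S f" shows "f (aneg R x) = aneg S (f x)"
proof -
  interpret R: nalg R by fact
  interpret S: nalg S by fact
  have "aadd S (f (aneg R x)) (f x) = azero S"
    using lin_add[OF assms(3), of "aneg R x" x] lin_zero[OF assms] by (simp add: R.l_neg)
  then show ?thesis by (metis S.r_neg1 S.r_zero S.a_comm)
qed
lemma lin_sub: assumes "nalg R" "nalg S" "lin R S f" shows "f (asub R x y) = asub S (f x) (f y)"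
  using lin_add[OF assms(3)] lin_neg[OF assms] by (simp add: asub_def)

lemma bilin_l: "bilin A K g \<Longrightarrow> lin A K (\<lambda>a. g a b)" unfolding bilin_def by blast
lemma bilin_r: "bilin A K g \<Longrightarrow> lin A K (g a)" unfolding bilin_def by blast

lemma mem_out: assumes "nalg K" shows "m \<in> out_class K m"
proof -
  interpret K: nalg K by fact
  have "mul_add K m (eps K (azero K)) = m"
    by (simp add: mul_add_def eps_def K.l_null K.r_null K.r_zero)
  then show ?thesis unfolding out_class_def by (metis (mono_tags, lifting) mem_Collect_eq)
qed

locale kern = A: nalg A + K: nalg K for A :: "('f::field,'a) alg" and K :: "('f,'k) alg" +
  fixes xi :: "'a \<Rightarrow> 'k bim set" and mu :: "'a \<Rightarrow> 'k bim"
  assumes law: "bimult_law A K xi mu"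
begin
abbreviation u where "u a \<equiv> fst (mu a)"
abbreviation v where "v a \<equiv> snd (mu a)"

lemma mu_bim: "bimult K (mu a)" using law unfolding bimult_law_def Mul_def by blast
lemma mu_add: "mu (aadd A a b) = mul_add K (mu a) (mu b)" using law unfolding bimult_law_def by blast
lemma mu_sc: "mu (asc A c a) = mul_sc K c (mu a)" using law unfolding bimult_law_def by blast
lemma mu_xi: "out_class K (mu a) = xi a" using law unfolding bimult_law_def by blast
lemma mu_comm: "u a (v b x) = v b (u a x)"
proof -
  have "fst (mu a) \<circ> snd (mu b) = snd (mu b) \<circ> fst (mu a)" using law unfolding bimult_law_def by blast
  then show ?thesis by (metis comp_apply)
qed
lemma u_lin: "lin K K (u a)" using mu_bim unfolding bimult_def by blast
lemma v_lin: "lin K K (v a)" using mu_bim unfolding bimult_def by blast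
lemma u_add: "u a (aadd K x y) = aadd K (u a x) (u a y)" by (rule lin_add[OF u_lin])
lemma v_add: "v a (aadd K x y) = aadd K (v a x) (v a y)" by (rule lin_add[OF v_lin])
lemma u_sc: "u a (asc K c x) = asc K c (u a x)" by (rule lin_sc[OF u_lin])
lemma v_sc: "v a (asc K c x) = asc K c (v a x)" by (rule lin_sc[OF v_lin])
lemma u_zero: "u a (azero K) = azero K" by (rule lin_zero[OF K.nalg_axioms K.nalg_axioms u_lin])
lemma v_zero: "v a (azero K) = azero K" by (rule lin_zero[OF K.nalg_axioms K.nalg_axioms v_lin])
lemma u_neg: "u a (aneg K x) = aneg K (u a x)" by (rule lin_neg[OF K.nalg_axioms K.nalg_axioms u_lin])
lemma v_neg: "v a (aneg K x) = aneg K (v a x)" by (rule lin_neg[OF K.nalg_axioms K.nalg_axioms v_lin])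
lemma u_sub: "u a (asub K x y) = asub K (u a x) (u a y)" by (rule lin_sub[OF K.nalg_axioms K.nalg_axioms u_lin])
lemma v_sub: "v a (asub K x y) = asub K (v a x) (v a y)" by (rule lin_sub[OF K.nalg_axioms K.nalg_axioms v_lin])
lemma mid: "amul K x (u a y) = amul K (v a x) y" using mu_bim unfolding bimult_def by blast
lemma u_mul: "u a (amul K x y) = amul K (u a x) y" using mu_bim unfolding bimult_def by blast
lemma v_mul: "v a (amul K x y) = amul K x (v a y)" using mu_bim unfolding bimult_def by blast
lemma ua_add: "u (aadd A a b) x = aadd K (u a x) (u b x)" by (simp add: mu_add mul_add_def)
lemma va_add: "v (aadd A a b) x = aadd K (v a x) (v b x)" by (simp add: mu_add mul_add_def)
lemma ua_sc: "u (asc A c a) x = asc K c (u a x)" by (simp add: mu_sc mul_sc_def)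
lemma va_sc: "v (asc A c a) x = asc K c (v a x)" by (simp add: mu_sc mul_sc_def)
lemma ua_zero: "u (azero A) x = azero K"
  using ua_sc[of 0 "azero A" x] by (simp add: A.zero_sc K.zero_sc)
lemma va_zero: "v (azero A) x = azero K"
  using va_sc[of 0 "azero A" x] by (simp add: A.zero_sc K.zero_sc)
lemma mu_in_xi: "mu a \<in> xi a" using mem_out[OF K.nalg_axioms, of "mu a"] mu_xi by simp

text \<open>The associativity core for the crossed product multiplication.\<close>
definition sm :: "('a \<Rightarrow> 'a \<Rightarrow> 'k) \<Rightarrow> 'a \<Rightarrow> 'k \<Rightarrow> 'a \<Rightarrow> 'k \<Rightarrow> 'k" where
  "sm H a k a' k' = aadd K (aadd K (aadd K (u a k') (v a' k)) (amul K k k')) (H a a')"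

lemma sm_assoc:
  assumes Hl: "\<And>a b k. aadd K (amul K (H a b) k) (u (amul A a b) k) = u a (u b k)"
    and Hr: "\<And>a b k. aadd K (amul K k (H a b)) (v (amul A a b) k) = v b (v a k)"
    and Hc: "\<And>x y z. aadd K (u x (H y z)) (H x (amul A y z)) =
                          aadd K (H (amul A x y) z) (v z (H x y))"
  shows "sm H (amul A a a') (sm H a k a' k') a'' k'' = sm H a k (amul A a' a'') (sm H a' k' a'' k'')"
proof -
  have e1: "u (amul A a a') k'' = asub K (u a (u a' k'')) (amul K (H a a') k'')"
    using Hl[where a=a and b=a' and k=k''] by (metis K.r_neg1 K.minus_eq K.a_comm)
  have e2: "v (amul A a' a'') k = asub K (v a'' (v a' k)) (amul K k (H a' a''))"
    using Hr[where a=a' and b=a'' and k=k] by (metis K.r_neg1 K.minus_eq K.a_comm)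
  have e3: "v a'' (H a a') = asub K (aadd K (u a (H a' a'')) (H a (amul A a' a''))) (H (amul A a a') a'')"
    using Hc[where x=a and y=a' and z=a''] by (metis K.r_neg1 K.minus_eq K.a_comm)
  have e4: "amul K (v a' k) k'' = amul K k (u a' k'')" by (rule mid[symmetric])
  have e5: "amul K (u a k') k'' = u a (amul K k' k'')" by (rule u_mul[symmetric])
  show ?thesis unfolding sm_def
    apply (simp only: u_add v_add K.l_distr K.r_distr v_mul e1 e2 e3 e4 e5 mu_comm[of a a''])
    by algebra
qed
end

locale kernh = kern A K xi mu for A :: "('f::field,'a) alg" and K :: "('f,'k) alg" and xi mu +
  fixes h :: "'a \<Rightarrow> 'a \<Rightarrow> 'k" assumes hind: "hindrance A K mu h"
begin
lemma h_bil: "bilin A K h" using hind unfolding hindrance_def by blast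
lemma h_eq: "mul_add K (eps K (h a1 a2)) (mu (amul A a1 a2)) = mul_prod (mu a1) (mu a2)"
  using hind unfolding hindrance_def by blast
lemma h_l: "aadd K (amul K (h a b) k) (u (amul A a b) k) = u a (u b k)"
proof -
  have "fst (mul_add K (eps K (h a b)) (mu (amul A a b))) k = fst (mul_prod (mu a) (mu b)) k"
    by (simp only: h_eq)
  then show ?thesis by (simp add: mul_add_def eps_def mul_prod_def)
qed
lemma h_r: "aadd K (amul K k (h a b)) (v (amul A a b) k) = v b (v a k)"
proof -
  have "snd (mul_add K (eps K (h a b)) (mu (amul A a b))) k = snd (mul_prod (mu a) (mu b)) k"
    by (simp only: h_eq)
  then show ?thesis by (simp add: mul_add_def eps_def mul_prod_def)
qed
end




context kernh begin

lemma constr: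
  assumes ov: "obs_vanishes A K mu h"
  shows "extendible TYPE('a \<times> 'k) A K xi"
proof -
  obtain g where gb: "bilin A K g" and gA: "\<And>a b. g a b \<in> Anni K"
    and geq: "\<And>a1 a2 a3. obs_cocycle A K mu h a1 a2 a3 = hoch_cobound2 A K mu g a1 a2 a3"
    using ov unfolding obs_vanishes_def by blast
  define H where "H a b = asub K (h a b) (g a b)" for a b
  have gl: "amul K (g a b) k = azero K" for a b k using gA[of a b] unfolding Anni_def by blast
  have gr: "amul K k (g a b) = azero K" for a b k using gA[of a b] unfolding Anni_def by blast
  have Hl: "aadd K (amul K (H a b) k) (u (amul A a b) k) = u a (u b k)" for a b k
  proof -
    have "amul K (H a b) k = amul K (h a b) k"
      unfolding H_def K.minus_eq K.l_distr K.l_minus gl K.minus_zero K.r_zero ..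
    then show ?thesis using h_l by simp
  qed
  have Hr: "aadd K (amul K k (H a b)) (v (amul A a b) k) = v b (v a k)" for a b k
  proof -
    have "amul K k (H a b) = amul K k (h a b)"
      unfolding H_def K.minus_eq K.r_distr K.r_minus gr K.minus_zero K.r_zero ..
    then show ?thesis using h_r by simp
  qed
  have Hc: "aadd K (u x (H y z)) (H x (amul A y z)) = aadd K (H (amul A x y) z) (v z (H x y))" for x y z
  proof -
    have d: "asub K (aadd K (u x (H y z)) (H x (amul A y z))) (aadd K (H (amul A x y) z) (v z (H x y)))
       = asub K (obs_cocycle A K mu h x y z) (hoch_cobound2 A K mu g x y z)"
      unfolding obs_cocycle_def hoch_cobound2_def H_def u_sub v_sub by algebra
    have "asub K (aadd K (u x (H y z)) (H x (amul A y z))) (aadd K (H (amul A x y) z) (v z (H x y))) = azero K"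
      unfolding d geq[of x y z] by (simp only: K.minus_eq K.r_neg)
    then show ?thesis by (simp only: K.sub_eq_zero)
  qed
  have hb: "bilin A K h" by (rule h_bil)
  have H_l: "lin A K (\<lambda>a. H a b)" for b
    using lin_add[OF bilin_l[OF hb]] lin_add[OF bilin_l[OF gb]] lin_sc[OF bilin_l[OF hb]] lin_sc[OF bilin_l[OF gb]]
    unfolding lin_def H_def K.minus_eq K.minus_add K.sc_add K.sc_neg by (simp add: K.minus_add K.a_assoc K.a_comm K.a_lcomm)
  have H_r: "lin A K (H a)" for a
    using lin_add[OF bilin_r[OF hb]] lin_add[OF bilin_r[OF gb]] lin_sc[OF bilin_r[OF hb]] lin_sc[OF bilin_r[OF gb]]
    unfolding lin_def H_def K.minus_eq K.minus_add K.sc_add K.sc_neg by (simp add: K.minus_add K.a_assoc K.a_comm K.a_lcomm)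
  have H0l: "H (azero A) b = azero K" for b by (rule lin_zero[OF A.nalg_axioms K.nalg_axioms H_l])
  have H0r: "H a (azero A) = azero K" for a by (rule lin_zero[OF A.nalg_axioms K.nalg_axioms H_r])
  define B :: "('f, 'a \<times> 'k) alg" where "B = \<lparr>aadd = \<lambda>p q. (aadd A (fst p) (fst q), aadd K (snd p) (snd q)),
     azero = (azero A, azero K), aneg = \<lambda>p. (aneg A (fst p), aneg K (snd p)),
     asc = \<lambda>c p. (asc A c (fst p), asc K c (snd p)),
     amul = \<lambda>p q. (amul A (fst p) (fst q), sm H (fst p) (snd p) (fst q) (snd q))\<rparr>"
  have Bs: "aadd B p q = (aadd A (fst p) (fst q), aadd K (snd p) (snd q))"
    "azero B = (azero A, azero K)" "aneg B p = (aneg A (fst p), aneg K (snd p))"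
    "asc B c p = (asc A c (fst p), asc K c (snd p))"
    "amul B p q = (amul A (fst p) (fst q), sm H (fst p) (snd p) (fst q) (snd q))" for p q c
    unfolding B_def by simp_all
  have isB: "is_alg B"
    unfolding is_alg_def Bs
  proof (intro conjI allI)
    fix x y z :: "'a \<times> 'k" and a b :: 'f
    show "(aadd A (fst (aadd A (fst x) (fst y), aadd K (snd x) (snd y))) (fst z), aadd K (snd (aadd A (fst x) (fst y), aadd K (snd x) (snd y))) (snd z)) =
       (aadd A (fst x) (fst (aadd A (fst y) (fst z), aadd K (snd y) (snd z))), aadd K (snd x) (snd (aadd A (fst y) (fst z), aadd K (snd y) (snd z))))"
      by (simp add: A.a_assoc K.a_assoc)
  next
    fix x y :: "'a \<times> 'k"
    show "(aadd A (fst x) (fst y), aadd K (snd x) (snd y)) = (aadd A (fst y) (fst x), aadd K (snd y) (snd x))"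
      by (simp add: A.a_comm K.a_comm)
  next
    fix x :: "'a \<times> 'k"
    show "(aadd A (fst (azero A, azero K)) (fst x), aadd K (snd (azero A, azero K)) (snd x)) = x"
      by (simp add: A.l_zero K.l_zero)
  next
    fix x :: "'a \<times> 'k"
    show "(aadd A (fst (aneg A (fst x), aneg K (snd x))) (fst x), aadd K (snd (aneg A (fst x), aneg K (snd x))) (snd x)) = (azero A, azero K)"
      by (simp add: A.l_neg K.l_neg)
  next
    fix x :: "'a \<times> 'k" and a b :: 'f
    show "(asc A (a * b) (fst x), asc K (a * b) (snd x)) = (asc A a (fst (asc A b (fst x), asc K b (snd x))), asc K a (snd (asc A b (fst x), asc K b (snd x))))"
      by (simp add: A.sc_mult K.sc_mult)
  next
    fix x :: "'a \<times> 'k"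
    show "(asc A 1 (fst x), asc K 1 (snd x)) = x" by (simp add: A.sc_one K.sc_one)
  next
    fix x y :: "'a \<times> 'k" and a :: 'f
    show "(asc A a (fst (aadd A (fst x) (fst y), aadd K (snd x) (snd y))), asc K a (snd (aadd A (fst x) (fst y), aadd K (snd x) (snd y)))) =
       (aadd A (fst (asc A a (fst x), asc K a (snd x))) (fst (asc A a (fst y), asc K a (snd y))),
        aadd K (snd (asc A a (fst x), asc K a (snd x))) (snd (asc A a (fst y), asc K a (snd y))))"
      by (simp add: A.sc_add K.sc_add)
  next
    fix x :: "'a \<times> 'k" and a b :: 'f
    show "(asc A (a + b) (fst x), asc K (a + b) (snd x)) =
       (aadd A (fst (asc A a (fst x), asc K a (snd x))) (fst (asc A b (fst x), asc K b (snd x))),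
        aadd K (snd (asc A a (fst x), asc K a (snd x))) (snd (asc A b (fst x), asc K b (snd x))))"
      by (simp add: A.sc_add2 K.sc_add2)
  next
    fix x y z :: "'a \<times> 'k"
    show "(amul A (fst (amul A (fst x) (fst y), sm H (fst x) (snd x) (fst y) (snd y))) (fst z),
        sm H (fst (amul A (fst x) (fst y), sm H (fst x) (snd x) (fst y) (snd y))) (snd (amul A (fst x) (fst y), sm H (fst x) (snd x) (fst y) (snd y))) (fst z) (snd z)) =
       (amul A (fst x) (fst (amul A (fst y) (fst z), sm H (fst y) (snd y) (fst z) (snd z))),
        sm H (fst x) (snd x) (fst (amul A (fst y) (fst z), sm H (fst y) (snd y) (fst z) (snd z))) (snd (amul A (fst y) (fst z), sm H (fst y) (snd y) (fst z) (snd z))))"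
      using sm_assoc[OF Hl Hr Hc] by (simp add: A.m_assoc)
  next
    fix x y z :: "'a \<times> 'k"
    show "(amul A (fst x) (fst (aadd A (fst y) (fst z), aadd K (snd y) (snd z))),
        sm H (fst x) (snd x) (fst (aadd A (fst y) (fst z), aadd K (snd y) (snd z))) (snd (aadd A (fst y) (fst z), aadd K (snd y) (snd z)))) =
       (aadd A (fst (amul A (fst x) (fst y), sm H (fst x) (snd x) (fst y) (snd y))) (fst (amul A (fst x) (fst z), sm H (fst x) (snd x) (fst z) (snd z))),
        aadd K (snd (amul A (fst x) (fst y), sm H (fst x) (snd x) (fst y) (snd y))) (snd (amul A (fst x) (fst z), sm H (fst x) (snd x) (fst z) (snd z))))"
      unfolding fst_conv snd_conv sm_def A.r_distr u_add va_add K.r_distr lin_add[OF H_r] by algebra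
  next
    fix x y z :: "'a \<times> 'k"
    show "(amul A (fst (aadd A (fst x) (fst y), aadd K (snd x) (snd y))) (fst z),
        sm H (fst (aadd A (fst x) (fst y), aadd K (snd x) (snd y))) (snd (aadd A (fst x) (fst y), aadd K (snd x) (snd y))) (fst z) (snd z)) =
       (aadd A (fst (amul A (fst x) (fst z), sm H (fst x) (snd x) (fst z) (snd z))) (fst (amul A (fst y) (fst z), sm H (fst y) (snd y) (fst z) (snd z))),
        aadd K (snd (amul A (fst x) (fst z), sm H (fst x) (snd x) (fst z) (snd z))) (snd (amul A (fst y) (fst z), sm H (fst y) (snd y) (fst z) (snd z))))"
      unfolding fst_conv snd_conv sm_def A.l_distr ua_add v_add K.l_distr lin_add[OF H_l] by algebra
  next
    fix x y :: "'a \<times> 'k" and a :: 'f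
    show "(amul A (fst (asc A a (fst x), asc K a (snd x))) (fst y),
        sm H (fst (asc A a (fst x), asc K a (snd x))) (snd (asc A a (fst x), asc K a (snd x))) (fst y) (snd y)) =
       (asc A a (fst (amul A (fst x) (fst y), sm H (fst x) (snd x) (fst y) (snd y))),
        asc K a (snd (amul A (fst x) (fst y), sm H (fst x) (snd x) (fst y) (snd y))))"
      unfolding fst_conv snd_conv sm_def A.m_scl ua_sc v_sc K.m_scl lin_sc[OF H_l] K.sc_add ..
  next
    fix x y :: "'a \<times> 'k" and a :: 'f
    show "(amul A (fst x) (fst (asc A a (fst y), asc K a (snd y))),
        sm H (fst x) (snd x) (fst (asc A a (fst y), asc K a (snd y))) (snd (asc A a (fst y), asc K a (snd y)))) =
       (asc A a (fst (amul A (fst x) (fst y), sm H (fst x) (snd x) (fst y) (snd y))),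
        asc K a (snd (amul A (fst x) (fst y), sm H (fst x) (snd x) (fst y) (snd y))))"
      unfolding fst_conv snd_conv sm_def A.m_scr u_sc va_sc K.m_scr lin_sc[OF H_r] K.sc_add ..
  qed
  define iota :: "'k \<Rightarrow> 'a \<times> 'k" where "iota k = (azero A, k)" for k
  define gamma :: "'a \<Rightarrow> 'a \<times> 'k" where "gamma a = (a, azero K)" for a
  have "alg_hom K B iota"
    unfolding alg_hom_def lin_def Bs iota_def sm_def
    by (simp add: A.l_zero A.sc_zero A.l_null ua_zero va_zero H0l K.l_zero K.r_zero)
  moreover have "inj iota" unfolding inj_def iota_def by simp
  moreover have "\<forall>b k. amul B b (iota k) \<in> range iota \<and> amul B (iota k) b \<in> range iota"
    unfolding Bs iota_def by (simp add: A.l_null A.r_null)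
  moreover have "alg_hom B A fst" unfolding alg_hom_def lin_def Bs by simp
  moreover have "surj (fst :: 'a \<times> 'k \<Rightarrow> 'a)" by (rule surjI[where f="\<lambda>a. (a, azero K)"]) simp
  moreover have "{b. fst b = azero A} = range iota" unfolding iota_def by force
  moreover have "lin A B gamma" unfolding lin_def Bs gamma_def by (simp add: K.l_zero K.sc_zero)
  moreover have "\<forall>a. fst (gamma a) = a" unfolding gamma_def by simp
  moreover have "\<forall>a. xi a = out_class K (\<lambda>k. inv_into UNIV iota (amul B (gamma a) (iota k)),
                                 \<lambda>k. inv_into UNIV iota (amul B (iota k) (gamma a)))"
  proof
    fix a
    have i: "inv_into UNIV (Pair (azero A)) (azero A, x) = x" for x
      by (rule inv_f_f) (simp add: inj_def)
    have "(\<lambda>k. inv_into UNIV iota (amul B (gamma a) (iota k)), \<lambda>k. inv_into UNIV iota (amul B (iota k) (gamma a))) = mu a"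
      unfolding Bs gamma_def iota_def sm_def
      by (simp add: A.l_null A.r_null i ua_zero va_zero u_zero v_zero H0l H0r K.l_zero K.r_zero K.l_null K.r_null)
    then show "xi a = out_class K (\<lambda>k. inv_into UNIV iota (amul B (gamma a) (iota k)),
                                 \<lambda>k. inv_into UNIV iota (amul B (iota k) (gamma a)))" using mu_xi by simp
  qed
  ultimately show ?thesis unfolding extendible_def using isB
    by (intro exI[of _ B] exI[of _ iota] exI[of _ fst] exI[of _ gamma]) blast
qed
end



context kernh begin

lemma ext_obs:
  assumes ext: "extendible TYPE('b) A K xi"
  shows "obs_vanishes A K mu h"
proof -
  obtain B :: "('f, 'b) alg" and iota beta gamma where
    isB: "is_alg B" and hi: "alg_hom K B iota" and ii: "inj iota"
    and idl: "\<And>b k. amul B b (iota k) \<in> range iota \<and> amul B (iota k) b \<in> range iota"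
    and hb: "alg_hom B A beta" and ker: "{b. beta b = azero A} = range iota"
    and lg: "lin A B gamma" and bg: "\<And>a. beta (gamma a) = a"
    and xiE: "\<And>a. xi a = out_class K (\<lambda>k. inv_into UNIV iota (amul B (gamma a) (iota k)),
                                 \<lambda>k. inv_into UNIV iota (amul B (iota k) (gamma a)))"
    using ext unfolding extendible_def by blast
  interpret B: nalg B by (unfold_locales, rule isB)
  have li: "lin K B iota" using hi unfolding alg_hom_def by blast
  have lb: "lin B A beta" using hb unfolding alg_hom_def by blast
  have i_add: "iota (aadd K x y) = aadd B (iota x) (iota y)" for x y by (rule lin_add[OF li])
  have i_sc: "iota (asc K c x) = asc B c (iota x)" for c x by (rule lin_sc[OF li])
  have i_zero: "iota (azero K) = azero B" by (rule lin_zero[OF K.nalg_axioms B.nalg_axioms li])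
  have i_sub: "iota (asub K x y) = asub B (iota x) (iota y)" for x y
    by (rule lin_sub[OF K.nalg_axioms B.nalg_axioms li])
  have i_mul: "iota (amul K x y) = amul B (iota x) (iota y)" for x y
    using hi unfolding alg_hom_def by blast
  have i_inj: "x = y" if "iota x = iota y" for x y using ii that unfolding inj_def by blast
  have i_inv: "iota (inv_into UNIV iota z) = z" if "z \<in> range iota" for z
    using that by (rule f_inv_into_f)
  have b_sub: "beta (asub B x y) = asub A (beta x) (beta y)" for x y
    by (rule lin_sub[OF B.nalg_axioms A.nalg_axioms lb])
  have b_mul: "beta (amul B x y) = amul A (beta x) (beta y)" for x y
    using hb unfolding alg_hom_def by blast
  have b_add: "beta (aadd B x y) = aadd A (beta x) (beta y)" for x y by (rule lin_add[OF lb])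
  have b_i: "beta (iota y) = azero A" for y using ker by blast
  have in_r: "z \<in> range iota" if "beta z = azero A" for z using ker that by blast
  define P where "P a y \<longleftrightarrow> (\<forall>k. iota (u a k) = amul B (aadd B (gamma a) (iota y)) (iota k) \<and>
                                  iota (v a k) = amul B (iota k) (aadd B (gamma a) (iota y)))" for a y
  have ex: "\<exists>y. P a y" for a
  proof -
    define m where "m = (\<lambda>k. inv_into UNIV iota (amul B (gamma a) (iota k)),
                                 \<lambda>k. inv_into UNIV iota (amul B (iota k) (gamma a)))"
    have "mu a \<in> out_class K m" using mu_in_xi[of a] xiE[of a] unfolding m_def by simp
    then obtain c where c: "mu a = mul_add K m (eps K c)" unfolding out_class_def by blast
    have "P a c" unfolding P_def
    proof
      fix k
      have "u a k = aadd K (inv_into UNIV iota (amul B (gamma a) (iota k))) (amul K c k)"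
        unfolding c by (simp add: mul_add_def m_def eps_def)
      then have 1: "iota (u a k) = amul B (aadd B (gamma a) (iota c)) (iota k)"
        by (simp add: i_add i_mul i_inv idl B.l_distr)
      have "v a k = aadd K (inv_into UNIV iota (amul B (iota k) (gamma a))) (amul K k c)"
        unfolding c by (simp add: mul_add_def m_def eps_def)
      then have 2: "iota (v a k) = amul B (iota k) (aadd B (gamma a) (iota c))"
        by (simp add: i_add i_mul i_inv idl B.r_distr)
      show "iota (u a k) = amul B (aadd B (gamma a) (iota c)) (iota k) \<and>
            iota (v a k) = amul B (iota k) (aadd B (gamma a) (iota c))" using 1 2 by blast
    qed
    then show ?thesis by blast
  qed
  have padd: "P (aadd A a a') (aadd K y y')" if "P a y" "P a' y'" for a a' y y'
    unfolding P_def
  proof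
    fix k
    have p1: "iota (u a k) = amul B (aadd B (gamma a) (iota y)) (iota k)"
      "iota (v a k) = amul B (iota k) (aadd B (gamma a) (iota y))" using that(1) unfolding P_def by blast+
    have p2: "iota (u a' k) = amul B (aadd B (gamma a') (iota y')) (iota k)"
      "iota (v a' k) = amul B (iota k) (aadd B (gamma a') (iota y'))" using that(2) unfolding P_def by blast+
    show "iota (u (aadd A a a') k) = amul B (aadd B (gamma (aadd A a a')) (iota (aadd K y y'))) (iota k) \<and>
          iota (v (aadd A a a') k) = amul B (iota k) (aadd B (gamma (aadd A a a')) (iota (aadd K y y')))"
      unfolding ua_add va_add i_add p1 p2 lin_add[OF lg] by (intro conjI; algebra)
  qed
  have psc: "P (asc A c a) (asc K c y)" if "P a y" for c a y
    unfolding P_def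
  proof
    fix k
    have p1: "iota (u a k) = amul B (aadd B (gamma a) (iota y)) (iota k)"
      "iota (v a k) = amul B (iota k) (aadd B (gamma a) (iota y))" using that(1) unfolding P_def by blast+
    show "iota (u (asc A c a) k) = amul B (aadd B (gamma (asc A c a)) (iota (asc K c y))) (iota k) \<and>
          iota (v (asc A c a) k) = amul B (iota k) (aadd B (gamma (asc A c a)) (iota (asc K c y)))"
      unfolding ua_sc va_sc i_sc p1 lin_sc[OF lg] B.sc_add[symmetric] B.m_scl B.m_scr by simp
  qed
  obtain c where lc: "lin A K c" and Pc: "\<And>a. P a (c a)"
    using lin_select[OF A.nalg_axioms K.nalg_axioms ex padd psc] by blast
  define g' where "g' a = aadd B (gamma a) (iota (c a))" for a
  have ku: "iota (u a k) = amul B (g' a) (iota k)" for a k using Pc[of a] unfolding P_def g'_def by blast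
  have kv: "iota (v a k) = amul B (iota k) (g' a)" for a k using Pc[of a] unfolding P_def g'_def by blast
  have lg': "lin A B g'" unfolding lin_def g'_def
    using lin_add[OF lg] lin_sc[OF lg] lin_add[OF lc] lin_sc[OF lc] i_add i_sc
    by (simp add: B.sc_add B.a_assoc B.a_comm B.a_lcomm)
  have bg': "beta (g' a) = a" for a unfolding g'_def b_add bg b_i A.r_zero ..
  define D where "D a b = asub B (amul B (g' a) (g' b)) (g' (amul A a b))" for a b
  have Dr: "D a b \<in> range iota" for a b
    by (rule in_r) (simp add: D_def b_sub b_mul bg' A.sub_eq_zero)
  define Hh where "Hh a b = inv_into UNIV iota (D a b)" for a b
  have iH: "iota (Hh a b) = D a b" for a b unfolding Hh_def by (rule i_inv[OF Dr])
  have Hlin_l: "lin A K (\<lambda>a. Hh a b)" for b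
    unfolding lin_def
  proof (intro conjI allI)
    fix x y show "Hh (aadd A x y) b = aadd K (Hh x b) (Hh y b)"
      by (rule i_inj) (simp only: i_add iH D_def A.l_distr lin_add[OF lg'] B.l_distr, algebra)
  next
    fix cc x show "Hh (asc A cc x) b = asc K cc (Hh x b)"
      by (rule i_inj) (simp only: i_sc iH D_def A.m_scl lin_sc[OF lg'] B.m_scl B.minus_eq B.sc_add B.sc_neg)
  qed
  have Hlin_r: "lin A K (Hh a)" for a
    unfolding lin_def
  proof (intro conjI allI)
    fix x y show "Hh a (aadd A x y) = aadd K (Hh a x) (Hh a y)"
      by (rule i_inj) (simp only: i_add iH D_def A.r_distr lin_add[OF lg'] B.r_distr, algebra)
  next
    fix cc x show "Hh a (asc A cc x) = asc K cc (Hh a x)"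
      by (rule i_inj) (simp only: i_sc iH D_def A.m_scr lin_sc[OF lg'] B.m_scr B.minus_eq B.sc_add B.sc_neg)
  qed
  have Hb: "bilin A K Hh" unfolding bilin_def using Hlin_l Hlin_r by blast
  have HkL: "amul K (Hh a b) k = amul K (h a b) k" for a b k
  proof (rule i_inj)
    have hk: "amul K (h a b) k = asub K (u a (u b k)) (u (amul A a b) k)"
      using h_l[of a b k] by (metis K.r_neg1 K.minus_eq K.a_comm)
    show "iota (amul K (Hh a b) k) = iota (amul K (h a b) k)"
      unfolding hk i_mul iH i_sub ku D_def B.minus_eq B.l_distr B.l_minus B.m_assoc ..
  qed
  have HkR: "amul K k (Hh a b) = amul K k (h a b)" for a b k
  proof (rule i_inj)
    have hk: "amul K k (h a b) = asub K (v b (v a k)) (v (amul A a b) k)"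
      using h_r[of k a b] by (metis K.r_neg1 K.minus_eq K.a_comm)
    show "iota (amul K k (Hh a b)) = iota (amul K k (h a b))"
      unfolding hk i_mul iH i_sub kv D_def B.minus_eq B.r_distr B.r_minus B.m_assoc ..
  qed
  define g where "g a b = asub K (h a b) (Hh a b)" for a b
  have gA: "g a b \<in> Anni K" for a b
    unfolding Anni_def g_def
    by (simp add: K.minus_eq K.l_distr K.r_distr K.l_minus K.r_minus HkL HkR K.r_neg)
  have gb: "bilin A K g" unfolding bilin_def lin_def g_def
    using lin_add[OF bilin_l[OF h_bil]] lin_sc[OF bilin_l[OF h_bil]] lin_add[OF bilin_r[OF h_bil]] lin_sc[OF bilin_r[OF h_bil]]
      lin_add[OF Hlin_l] lin_sc[OF Hlin_l] lin_add[OF Hlin_r] lin_sc[OF Hlin_r]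
    by (simp add: K.minus_eq K.minus_add K.sc_add K.sc_neg K.a_assoc K.a_comm K.a_lcomm)
  have oc0: "obs_cocycle A K mu Hh x y z = azero K" for x y z
  proof (rule i_inj)
    show "iota (obs_cocycle A K mu Hh x y z) = iota (azero K)"
      unfolding obs_cocycle_def i_sub i_add ku kv iH i_zero D_def
      by (simp only: A.m_assoc, algebra)
  qed
  have "obs_cocycle A K mu h x y z = hoch_cobound2 A K mu g x y z" for x y z
  proof -
    have "asub K (obs_cocycle A K mu h x y z) (obs_cocycle A K mu Hh x y z) = hoch_cobound2 A K mu g x y z"
      unfolding obs_cocycle_def hoch_cobound2_def g_def u_sub v_sub by algebra
    then show ?thesis unfolding oc0 K.minus_eq K.minus_zero K.r_zero .
  qed
  then show ?thesis unfolding obs_vanishes_def using gb gA by blast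
qed
end

theorem mainTheorem17:
  fixes A :: "('f::field, 'a) alg" and K :: "('f, 'k) alg"
    and xi :: "'a \<Rightarrow> 'k bim set" and mu :: "'a \<Rightarrow> 'k bim" and h :: "'a \<Rightarrow> 'a \<Rightarrow> 'k"
  assumes "is_alg A" and "is_alg K"
    and "coupling A K xi"
    and "bimult_law A K xi mu"
    and "hindrance A K mu h"
  shows "(extendible TYPE('b) A K xi \<longrightarrow> obs_vanishes A K mu h) \<and>
         (obs_vanishes A K mu h \<longleftrightarrow> extendible TYPE('a \<times> 'k) A K xi)"
proof -
  interpret kernh A K xi mu h
    by (unfold_locales) (rule assms)+
  have 1: "extendible TYPE('b) A K xi \<longrightarrow> obs_vanishes A K mu h"
    using ext_obs by (rule impI)
  have 2: "extendible TYPE('a \<times> 'k) A K xi \<Longrightarrow> obs_vanishes A K mu h"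
    by (rule ext_obs)
  have 3: "obs_vanishes A K mu h \<Longrightarrow> extendible TYPE('a \<times> 'k) A K xi"
    by (rule constr)
  show ?thesis using 1 2 3 by (intro conjI iffI) auto
qed

end
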